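(* The map $\varphi:\mathbb{C}S_\infty\to\mathbb{C}(BC*S_\infty)$ is injective.
   Context: $BC$ is the bicyclic monoid $\langle p,q : pq=e\rangle$ with involution $p^*=q$. $S_\infty$ is the free monoid on $\{t_n,t_n^*: n\in\mathbb{N}\}$ with involution $t_n\mapsto t_n^*$. $BC*S_\infty$ is the free product of monoids, with the involution $(s_1t_1\cdots s_nt_n)^*=t_n^*s_n^*\cdots t_1^*s_1^*$. For a monoid $S$ with involution, $\mathbb{C}S$ is the semigroup algebra with basis $\{\delta_s:s\in S\}$, $\delta_s\delta_t=\delta_{st}$, $\delta_s^*=\delta_{s^*}$. Fix a C*-norm $\|\cdot\|$ on $\mathbb{C}(BC*S_\infty)$ (i.e. a norm whose completion is a C*-algebra containing $\mathbb{C}(BC*S_\infty)$ as a $*$-subalgebra). Let $\gamma_n=(n\|\delta_{t_n}\|)^{-1}$ and $a_n=\delta_p+\gamma_n\delta_{t_n}$ for $n\in\mathbb{N}$, and let $\varphi:\mathbb{C}S_\infty\to\mathbb{C}(BC*S_\infty)$ be the unique unital $*$-homomorphism with $\varphi(\delta_{t_n})=a_n$ for all $n\in\mathbb{N}$. *)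

theory Defs
  imports Complex_Main "HOL-Library.Function_Algebras"
begin

typedef posnat = "{n::nat. 0 < n}" morphisms nat_of Abs_posnat
  by auto

datatype sgen = T posnat | Ts posnat   (* T n = t_n,  Ts n = t_n^* *)

(* S_infinity = sgen list, product = append, unit = [] *)

fun sgen_inv :: "sgen \<Rightarrow> sgen" where
  "sgen_inv (T n) = Ts n"
| "sgen_inv (Ts n) = T n"

definition sinv :: "sgen list \<Rightarrow> sgen list" where
  "sinv w = rev (map sgen_inv w)"

text \<open>BC * S_infinity has the presentation  < p, q, t_n, t_n^* | pq = e >.
  Its elements are represented by their normal forms: words over
  {p, q, t_n, t_n^*} containing no factor p q.\<close>

datatype bsym = P | Q | L sgen

fun red :: "bsym list \<Rightarrow> bsym list" where
  "red [] = []"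
| "red (x # xs) = (case red xs of
       [] \<Rightarrow> [x]
     | (y # ys) \<Rightarrow> (if x = P \<and> y = Q then ys else x # y # ys))"

definition BCS :: "bsym list set" where
  "BCS = {w. red w = w}"

definition bmul :: "bsym list \<Rightarrow> bsym list \<Rightarrow> bsym list" where
  "bmul u v = red (u @ v)"

fun bsym_inv :: "bsym \<Rightarrow> bsym" where
  "bsym_inv P = Q"
| "bsym_inv Q = P"
| "bsym_inv (L a) = L (sgen_inv a)"

definition binv :: "bsym list \<Rightarrow> bsym list" where
  "binv w = rev (map bsym_inv w)"

definition supp :: "('a \<Rightarrow> complex) \<Rightarrow> 'a set" where
  "supp f = {x. f x \<noteq> 0}"

definition alg :: "'a set \<Rightarrow> ('a \<Rightarrow> complex) set" where
  "alg M = {f. finite (supp f) \<and> supp f \<subseteq> M}"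

definition delta :: "'a \<Rightarrow> ('a \<Rightarrow> complex)" where
  "delta s = (\<lambda>x. if x = s then 1 else 0)"

definition conv :: "('a \<Rightarrow> 'a \<Rightarrow> 'a) \<Rightarrow> ('a \<Rightarrow> complex) \<Rightarrow> ('a \<Rightarrow> complex) \<Rightarrow> ('a \<Rightarrow> complex)" where
  "conv m f g = (\<lambda>s. \<Sum>(u, v) \<in> {(u, v). u \<in> supp f \<and> v \<in> supp g \<and> m u v = s}. f u * g v)"

definition astar :: "('a \<Rightarrow> 'a) \<Rightarrow> ('a \<Rightarrow> complex) \<Rightarrow> ('a \<Rightarrow> complex)" where
  "astar i f = (\<lambda>s. cnj (f (i s)))"

definition smul :: "complex \<Rightarrow> ('a \<Rightarrow> complex) \<Rightarrow> ('a \<Rightarrow> complex)" where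
  "smul c f = (\<lambda>s. c * f s)"

text \<open>A C*-norm on the *-algebra CM: a norm which is submultiplicative and
  satisfies the C*-identity (equivalently, its completion is a C*-algebra
  containing CM as a *-subalgebra).\<close>

definition cstar_norm :: "('a \<Rightarrow> 'a \<Rightarrow> 'a) \<Rightarrow> ('a \<Rightarrow> 'a) \<Rightarrow> 'a set
    \<Rightarrow> (('a \<Rightarrow> complex) \<Rightarrow> real) \<Rightarrow> bool" where
  "cstar_norm m i M N \<longleftrightarrow>
     (\<forall>x\<in>alg M. 0 \<le> N x \<and> (N x = 0 \<longleftrightarrow> x = 0)) \<and>
     (\<forall>x\<in>alg M. \<forall>y\<in>alg M. N (x + y) \<le> N x + N y) \<and>
     (\<forall>c. \<forall>x\<in>alg M. N (smul c x) = cmod c * N x) \<and>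
     (\<forall>x\<in>alg M. \<forall>y\<in>alg M. N (conv m x y) \<le> N x * N y) \<and>
     (\<forall>x\<in>alg M. N (conv m (astar i x) x) = (N x)\<^sup>2)"

definition gam :: "((bsym list \<Rightarrow> complex) \<Rightarrow> real) \<Rightarrow> posnat \<Rightarrow> real" where
  "gam N n = 1 / (real (nat_of n) * N (delta [L (T n)]))"

definition aelt :: "((bsym list \<Rightarrow> complex) \<Rightarrow> real) \<Rightarrow> posnat \<Rightarrow> (bsym list \<Rightarrow> complex)" where
  "aelt N n = delta [P] + smul (complex_of_real (gam N n)) (delta [L (T n)])"

fun gen_img :: "((bsym list \<Rightarrow> complex) \<Rightarrow> real) \<Rightarrow> sgen \<Rightarrow> (bsym list \<Rightarrow> complex)" where
  "gen_img N (T n) = aelt N n"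
| "gen_img N (Ts n) = astar binv (aelt N n)"

fun word_img :: "((bsym list \<Rightarrow> complex) \<Rightarrow> real) \<Rightarrow> sgen list \<Rightarrow> (bsym list \<Rightarrow> complex)" where
  "word_img N [] = delta []"
| "word_img N (a # w) = conv bmul (gen_img N a) (word_img N w)"

text \<open>phi: the unique unital *-homomorphism C S_infinity -> C(BC * S_infinity)
  with phi(delta_{t_n}) = a_n, extended linearly.\<close>
definition phi :: "((bsym list \<Rightarrow> complex) \<Rightarrow> real) \<Rightarrow> (sgen list \<Rightarrow> complex) \<Rightarrow> (bsym list \<Rightarrow> complex)" where
  "phi N f = (\<Sum>w \<in> supp f. smul (f w) (word_img N w))"

end

theory Submission
  imports Defs
begin

definition cntL :: "bsym list \<Rightarrow> nat" where
  "cntL u = length (filter (\<lambda>x. x \<noteq> P \<and> x \<noteq> Q) u)"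

lemma cntL_red: "cntL (red xs) = cntL xs"
proof (induction xs)
  case Nil
  then show ?case by simp
next
  case (Cons x xs)
  show ?case
  proof (cases "red xs")
    case Nil
    then show ?thesis using Cons by (simp add: cntL_def)
  next
    case (Cons y ys)
    then show ?thesis using Cons.IH by (auto simp: cntL_def)
  qed
qed

lemma red_mapL: "red (map L w) = map L w"
  by (induction w) (auto split: list.splits)

lemma conv_nz: "conv m f g s \<noteq> 0 \<Longrightarrow> \<exists>u v. f u \<noteq> 0 \<and> g v \<noteq> 0 \<and> m u v = s"
proof (rule ccontr)
  assume a: "conv m f g s \<noteq> 0" and b: "\<not> (\<exists>u v. f u \<noteq> 0 \<and> g v \<noteq> 0 \<and> m u v = s)"
  have e: "{(u, v). u \<in> supp f \<and> v \<in> supp g \<and> m u v = s} = {}"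
    using b by (auto simp: supp_def)
  have "conv m f g s = 0" unfolding conv_def e sum.empty ..
  with a show False by simp
qed

lemma binv_binv: "binv (binv u) = u"
proof -
  have "bsym_inv (bsym_inv x) = x" for x by (cases x; simp; case_tac x3; simp)
  then show ?thesis by (simp add: binv_def rev_map comp_def)
qed

lemma gen_img_supp:
  assumes "gen_img N a u \<noteq> 0"
  shows "u = [P] \<or> u = [Q] \<or> u = [L a]"
proof (cases a)
  case (T n)
  then show ?thesis using assms
    by (auto simp: aelt_def delta_def smul_def split: if_splits)
next
  case (Ts n)
  then have "cnj (aelt N n (binv u)) \<noteq> 0" using assms by (simp add: astar_def)
  then have "binv u = [P] \<or> binv u = [L (T n)]"
    by (auto simp: aelt_def delta_def smul_def split: if_splits)
  then have "binv (binv u) = [Q] \<or> binv (binv u) = [L (Ts n)]"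
    by (auto simp: binv_def)
  then show ?thesis using Ts by (simp add: binv_binv)
qed

lemma gen_img_L:
  assumes "\<forall>n. gam N n \<noteq> 0"
  shows "gen_img N a [L a] \<noteq> 0"
proof (cases a)
  case (T n)
  then show ?thesis using assms
    by (simp add: aelt_def delta_def smul_def)
next
  case (Ts n)
  have "binv [L (Ts n)] = [L (T n)]" by (simp add: binv_def)
  then show ?thesis using Ts assms
    by (simp add: astar_def aelt_def delta_def smul_def)
qed

lemma word_img_props:
  assumes g: "\<forall>n. gam N n \<noteq> 0"
  shows "(\<forall>u. word_img N w u \<noteq> 0 \<longrightarrow> cntL u \<le> length w) \<and> word_img N w (map L w) \<noteq> 0
     \<and> (\<forall>u. cntL u = length w \<longrightarrow> u \<noteq> map L w \<longrightarrow> word_img N w u = 0)"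
proof (induction w)
  case Nil
  then show ?case by (auto simp: delta_def cntL_def)
next
  case (Cons a w)
  let ?f = "gen_img N a" and ?g = "word_img N w"
  have IH1: "\<And>u. ?g u \<noteq> 0 \<Longrightarrow> cntL u \<le> length w" using Cons.IH by blast
  have IH2: "?g (map L w) \<noteq> 0" using Cons.IH by blast
  have IH3: "\<And>u. cntL u = length w \<Longrightarrow> u \<noteq> map L w \<Longrightarrow> ?g u = 0" using Cons.IH by blast
  have fL: "?f [L a] \<noteq> 0" using gen_img_L[OF g] .
  have cf: "?f u \<noteq> 0 \<Longrightarrow> cntL u \<le> 1" for u
    using gen_img_supp[of N a u] by (auto simp: cntL_def)
  have B: "cntL s \<le> length (a # w)" if nz: "word_img N (a # w) s \<noteq> 0" for s
  proof -
    obtain u v where uv: "?f u \<noteq> 0" "?g v \<noteq> 0" "bmul u v = s"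
      using conv_nz[OF nz[simplified]] by blast
    have "cntL s = cntL u + cntL v" using uv(3) cntL_red[of "u @ v"] by (simp add: bmul_def cntL_def)
    then show ?thesis using cf[OF uv(1)] IH1[OF uv(2)] by simp
  qed
  have S: "{(u, v). u \<in> supp ?f \<and> v \<in> supp ?g \<and> bmul u v = s}
      = (if s = map L (a # w) then {([L a], map L w)} else {})"
    if cs: "cntL s = length (a # w)" for s
  proof -
    have H: "u = [L a] \<and> v = map L w \<and> s = map L (a # w)"
      if uv: "?f u \<noteq> 0" "?g v \<noteq> 0" "bmul u v = s" for u v
    proof -
      have "cntL s = cntL u + cntL v" using uv(3) cntL_red[of "u @ v"] by (simp add: bmul_def cntL_def)
      then have c: "cntL u = 1" "cntL v = length w" using cf[OF uv(1)] IH1[OF uv(2)] cs by auto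
      then have u: "u = [L a]" using gen_img_supp[OF uv(1)] by (auto simp: cntL_def)
      moreover have v: "v = map L w" using IH3 c(2) uv(2) by blast
      moreover have "s = map L (a # w)" using uv(3) red_mapL[of "a # w"] u v by (simp add: bmul_def)
      ultimately show ?thesis by blast
    qed
    have bm: "bmul [L a] (map L w) = map L (a # w)"
      using red_mapL[of "a # w"] by (simp add: bmul_def)
    show ?thesis
    proof (cases "s = map L (a # w)")
      case True
      have "{(u, v). u \<in> supp ?f \<and> v \<in> supp ?g \<and> bmul u v = s} = {([L a], map L w)}"
      proof (rule set_eqI)
        fix x :: "bsym list \<times> bsym list"
        obtain u v where x: "x = (u, v)" by fastforce
        show "x \<in> {(u, v). u \<in> supp ?f \<and> v \<in> supp ?g \<and> bmul u v = s} \<longleftrightarrow> x \<in> {([L a], map L w)}"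
        proof
          assume "x \<in> {(u, v). u \<in> supp ?f \<and> v \<in> supp ?g \<and> bmul u v = s}"
          then have "?f u \<noteq> 0" "?g v \<noteq> 0" "bmul u v = s" using x by (simp_all add: supp_def)
          from H[OF this] show "x \<in> {([L a], map L w)}" using x by simp
        next
          assume "x \<in> {([L a], map L w)}"
          then show "x \<in> {(u, v). u \<in> supp ?f \<and> v \<in> supp ?g \<and> bmul u v = s}"
            using fL IH2 bm True by (simp add: supp_def)
        qed
      qed
      then show ?thesis using True by simp
    next
      case False
      have "{(u, v). u \<in> supp ?f \<and> v \<in> supp ?g \<and> bmul u v = s} = {}"
        using H False by (force simp: supp_def)
      then show ?thesis using False by simp
    qed
  qed
  have C2: "word_img N (a # w) (map L (a # w)) \<noteq> 0"
  proof -
    have "cntL (map L (a # w)) = length (a # w)" by (simp add: cntL_def comp_def)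
    from S[OF this] have "word_img N (a # w) (map L (a # w)) = ?f [L a] * ?g (map L w)"
      by (simp add: conv_def)
    then show ?thesis using fL IH2 by simp
  qed
  have C3: "word_img N (a # w) s = 0" if "cntL s = length (a # w)" "s \<noteq> map L (a # w)" for s
    unfolding word_img.simps conv_def S[OF that(1)] using that(2) by simp
  show ?case using B C2 C3 by blast
qed

lemma gam_nz:
  assumes "cstar_norm bmul binv BCS N"
  shows "gam N n \<noteq> 0"
proof -
  have "red [L (T n)] = [L (T n)]" by simp
  then have "delta [L (T n)] \<in> alg BCS"
    by (auto simp: alg_def supp_def delta_def BCS_def)
  moreover have "delta [L (T n)] \<noteq> (0 :: bsym list \<Rightarrow> complex)"
    by (metis delta_def one_neq_zero zero_fun_apply)
  ultimately have "N (delta [L (T n)]) \<noteq> 0" using assms unfolding cstar_norm_def by blast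
  moreover have "real (nat_of n) \<noteq> 0" using nat_of[of n] by simp
  ultimately show ?thesis by (simp add: gam_def)
qed

lemma sum_fun_apply: "(\<Sum>w\<in>A. F w) s = (\<Sum>w\<in>A. (F w s :: complex))"
  by (induction A rule: infinite_finite_induct) auto

lemma phi_apply: "finite (supp f) \<Longrightarrow> finite D \<Longrightarrow> supp f \<subseteq> D \<Longrightarrow>
   phi N f s = (\<Sum>w\<in>D. f w * word_img N w s)"
proof -
  assume fin: "finite (supp f)" "finite D" "supp f \<subseteq> D"
  have "phi N f s = (\<Sum>w\<in>supp f. f w * word_img N w s)"
    by (simp add: phi_def sum_fun_apply smul_def)
  also have "\<dots> = (\<Sum>w\<in>D. f w * word_img N w s)"
    by (rule sum.mono_neutral_left) (use fin in \<open>auto simp: supp_def\<close>)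
  finally show ?thesis .
qed

theorem corollary3p3:
  fixes N :: "(bsym list \<Rightarrow> complex) \<Rightarrow> real"
  assumes "cstar_norm bmul binv BCS N"
  shows "inj_on (phi N) (alg (UNIV :: sgen list set))"
proof (rule inj_onI, rule ccontr)
  fix f g :: "sgen list \<Rightarrow> complex"
  assume fa: "f \<in> alg UNIV" and ga: "g \<in> alg UNIV" and eq: "phi N f = phi N g" and ne: "f \<noteq> g"
  have g0: "\<forall>n. gam N n \<noteq> 0" using gam_nz[OF assms] by blast
  note WP = word_img_props[OF g0]
  define D where "D = supp f \<union> supp g"
  have finD: "finite D" using fa ga by (simp add: D_def alg_def)
  define E where "E = {w \<in> D. f w \<noteq> g w}"
  have finE: "finite E" using finD by (simp add: E_def)
  have Ene: "E \<noteq> {}"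
  proof -
    obtain x where "f x \<noteq> g x" using ne by blast
    then have "x \<in> E" by (auto simp: E_def D_def supp_def)
    then show ?thesis by blast
  qed
  obtain w where wE: "w \<in> E" and wmax: "\<And>w'. w' \<in> E \<Longrightarrow> length w' \<le> length w"
  proof -
    have "Max (length ` E) \<in> length ` E" using finE Ene by (intro Max_in) auto
    then obtain w where "w \<in> E" "length w = Max (length ` E)" by auto
    moreover have "\<And>w'. w' \<in> E \<Longrightarrow> length w' \<le> Max (length ` E)"
      using finE by (intro Max_ge) auto
    ultimately show ?thesis using that by metis
  qed
  let ?s = "map L w"
  have cs: "cntL ?s = length w" by (simp add: cntL_def comp_def)
  have "phi N f ?s - phi N g ?s = (\<Sum>w'\<in>D. (f w' - g w') * word_img N w' ?s)"
    using phi_apply[of f D N ?s] phi_apply[of g D N ?s] fa ga finD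
    by (simp add: D_def alg_def sum_subtractf left_diff_distrib)
  also have "\<dots> = (f w - g w) * word_img N w ?s"
  proof -
    have wD: "w \<in> D" using wE by (simp add: E_def)
    have "(\<Sum>w'\<in>D - {w}. (f w' - g w') * word_img N w' ?s) = 0"
    proof (rule sum.neutral, rule ballI)
      fix w' assume w': "w' \<in> D - {w}"
      show "(f w' - g w') * word_img N w' ?s = 0"
      proof (cases "f w' = g w'")
        case False
        then have "w' \<in> E" using w' by (simp add: E_def)
        then have le: "length w' \<le> length w" by (rule wmax)
        have "word_img N w' ?s = 0"
        proof (cases "length w' = length w")
          case True
          have "?s \<noteq> map L w'" using w' map_injective[of L w w'] by (auto simp: inj_def)
          then show ?thesis using WP[of w'] cs True by metis
        next
          case False
          then have "cntL ?s > length w'" using cs le by simp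
          then show ?thesis using WP[of w'] by (meson not_le)
        qed
        then show ?thesis by simp
      qed simp
    qed
    then show ?thesis by (simp add: sum.remove[OF finD wD])
  qed
  finally have "phi N f ?s - phi N g ?s = (f w - g w) * word_img N w ?s" .
  moreover have "f w - g w \<noteq> 0" using wE by (simp add: E_def)
  moreover have "word_img N w ?s \<noteq> 0" using WP[of w] by blast
  ultimately show False using eq by simp
qed

end
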